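(* Let $\{\mathcal G,(\Gamma_0,\Gamma_1),(\widetilde\Gamma_0,\widetilde\Gamma_1)\}$ be a quasi boundary triple for the adjoint pair $\{S,\widetilde S\}$ (with cores $T$ of $S^*$ and $\widetilde T$ of $\widetilde S^*$). Then the following are equivalent: (i) $T=S^*$ and $\widetilde T=\widetilde S^*$; (ii) $\operatorname{ran}(\Gamma_0,\Gamma_1)^\top=\mathcal G\times\mathcal G$ and $\operatorname{ran}(\widetilde\Gamma_0,\widetilde\Gamma_1)^\top=\mathcal G\times\mathcal G$.
   Context: Let $\mathfrak H$ be a separable Hilbert space. An adjoint pair $\{S,\widetilde S\}$ consists of densely defined closed operators $S,\widetilde S$ in $\mathfrak H$ with $(Sf,g)=(f,\widetilde Sg)$ for all $f\in\operatorname{dom}S$, $g\in\operatorname{dom}\widetilde S$. Fix operators $T\subset S^*$ and $\widetilde T\subset\widetilde S^*$ which are cores, i.e. $\overline T=S^*$ and $\overline{\widetilde T}=\widetilde S^*$ (equivalently $T^*=S$, $\widetilde T^*=\widetilde S$). A triple $\{\mathcal G,(\Gamma_0,\Gamma_1),(\widetilde\Gamma_0,\widetilde\Gamma_1)\}$ for $\{S,\widetilde S\}$ consists of a Hilbert space $\mathcal G$ and linear maps $\Gamma_0,\Gamma_1:\operatorname{dom}T\to\mathcal G$, $\widetilde\Gamma_0,\widetilde\Gamma_1:\operatorname{dom}\widetilde T\to\mathcal G$. Put $A_0:=T\upharpoonright\ker\Gamma_0$ and $\widetilde A_0:=\widetilde T\upharpoonright\ker\widetilde\Gamma_0$. Conditions: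 (G) $(Tf,g)_{\mathfrak H}-(f,\widetilde Tg)_{\mathfrak H}=(\Gamma_1f,\widetilde\Gamma_0g)_{\mathcal G}-(\Gamma_0f,\widetilde\Gamma_1g)_{\mathcal G}$ for all $f\in\operatorname{dom}T$, $g\in\operatorname{dom}\widetilde T$; (DD) $\operatorname{ran}(\Gamma_0,\Gamma_1)^\top$ and $\operatorname{ran}(\widetilde\Gamma_0,\widetilde\Gamma_1)^\top$ are dense in $\mathcal G\times\mathcal G$; (M) $A_0^*=\widetilde A_0$ and $\widetilde A_0^*=A_0$. A quasi boundary triple is a triple satisfying (G), (DD) and (M). *)

theory Defs
  imports "HOL-Analysis.Analysis"
begin

text \<open>Complex Hilbert spaces, encoded as real Hilbert spaces (real part of the
complex inner product) equipped with an isometric real-linear map iunit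
(multiplication by the imaginary unit) with iunit (iunit x) = - x.\<close>

class chilbert_space = real_inner + complete_space +
  fixes iunit :: "'a \<Rightarrow> 'a"
  assumes iunit_add: "iunit (x + y) = iunit x + iunit y"
    and iunit_scaleR: "iunit (scaleR r x) = scaleR r (iunit x)"
    and iunit_iunit: "iunit (iunit x) = - x"
    and iunit_inner: "inner (iunit x) (iunit y) = inner x y"

definition cscale :: "complex \<Rightarrow> 'a::chilbert_space \<Rightarrow> 'a" where
  "cscale c x = scaleR (Re c) x + scaleR (Im c) (iunit x)"

text \<open>Complex inner product, linear in the first, antilinear in the second argument.\<close>
definition cinner :: "'a::chilbert_space \<Rightarrow> 'a \<Rightarrow> complex" where
  "cinner x y = Complex (inner x y) (inner x (iunit y))"

definition csubspace :: "'a::chilbert_space set \<Rightarrow> bool" where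
  "csubspace D \<longleftrightarrow> 0 \<in> D \<and> (\<forall>x\<in>D. \<forall>y\<in>D. x + y \<in> D) \<and> (\<forall>c. \<forall>x\<in>D. cscale c x \<in> D)"

text \<open>A (complex-)linear map defined on the subspace D (values outside D are irrelevant).\<close>
definition clinear_on :: "'a::chilbert_space set \<Rightarrow> ('a \<Rightarrow> 'b::chilbert_space) \<Rightarrow> bool" where
  "clinear_on D A \<longleftrightarrow> csubspace D \<and> (\<forall>x\<in>D. \<forall>y\<in>D. A (x + y) = A x + A y)
     \<and> (\<forall>c. \<forall>x\<in>D. A (cscale c x) = cscale c (A x))"

text \<open>An operator in H is given by its domain D and its action A on D.\<close>
definition graph :: "'a set \<Rightarrow> ('a \<Rightarrow> 'b) \<Rightarrow> ('a \<times> 'b) set" where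
  "graph D A = {(x, A x) | x. x \<in> D}"

definition linear_operator :: "'a::chilbert_space set \<Rightarrow> ('a \<Rightarrow> 'a) \<Rightarrow> bool" where
  "linear_operator D A \<longleftrightarrow> clinear_on D A"

definition densely_defined :: "'a::chilbert_space set \<Rightarrow> ('a \<Rightarrow> 'a) \<Rightarrow> bool" where
  "densely_defined D A \<longleftrightarrow> linear_operator D A \<and> closure D = UNIV"

definition closed_operator :: "'a::chilbert_space set \<Rightarrow> ('a \<Rightarrow> 'a) \<Rightarrow> bool" where
  "closed_operator D A \<longleftrightarrow> linear_operator D A \<and> closed (graph D A)"

definition adjoint_graph :: "'a::chilbert_space set \<Rightarrow> ('a \<Rightarrow> 'a) \<Rightarrow> ('a \<times> 'a) set" where
  "adjoint_graph D A = {(y, z). \<forall>x\<in>D. cinner (A x) y = cinner x z}"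

definition adjoint_pair :: "'a::chilbert_space set \<Rightarrow> ('a \<Rightarrow> 'a) \<Rightarrow> 'a set \<Rightarrow> ('a \<Rightarrow> 'a) \<Rightarrow> bool" where
  "adjoint_pair dS S dSt St \<longleftrightarrow>
     densely_defined dS S \<and> closed_operator dS S \<and>
     densely_defined dSt St \<and> closed_operator dSt St \<and>
     (\<forall>f\<in>dS. \<forall>g\<in>dSt. cinner (S f) g = cinner f (St g))"

definition core_of_adjoint :: "'a::chilbert_space set \<Rightarrow> ('a \<Rightarrow> 'a) \<Rightarrow> 'a set \<Rightarrow> ('a \<Rightarrow> 'a) \<Rightarrow> bool" where
  "core_of_adjoint dT T dS S \<longleftrightarrow> linear_operator dT T \<and>
     graph dT T \<subseteq> adjoint_graph dS S \<and> closure (graph dT T) = adjoint_graph dS S"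

definition quasi_boundary_triple ::
  "'a::chilbert_space set \<Rightarrow> ('a \<Rightarrow> 'a) \<Rightarrow> 'a set \<Rightarrow> ('a \<Rightarrow> 'a) \<Rightarrow>
   ('a \<Rightarrow> 'g::chilbert_space) \<Rightarrow> ('a \<Rightarrow> 'g) \<Rightarrow> ('a \<Rightarrow> 'g) \<Rightarrow> ('a \<Rightarrow> 'g) \<Rightarrow> bool" where
  "quasi_boundary_triple dT T dTt Tt G0 G1 Gt0 Gt1 \<longleftrightarrow>
     clinear_on dT G0 \<and> clinear_on dT G1 \<and> clinear_on dTt Gt0 \<and> clinear_on dTt Gt1 \<and>
     \<comment> \<open>(G)\<close>
     (\<forall>f\<in>dT. \<forall>g\<in>dTt. cinner (T f) g - cinner f (Tt g)
         = cinner (G1 f) (Gt0 g) - cinner (G0 f) (Gt1 g)) \<and>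
     \<comment> \<open>(DD)\<close>
     closure ((\<lambda>f. (G0 f, G1 f)) ` dT) = UNIV \<and>
     closure ((\<lambda>g. (Gt0 g, Gt1 g)) ` dTt) = UNIV \<and>
     \<comment> \<open>(M): A0 = T restricted to ker G0, At0 = Tt restricted to ker Gt0\<close>
     adjoint_graph {f\<in>dT. G0 f = 0} T = graph {g\<in>dTt. Gt0 g = 0} Tt \<and>
     adjoint_graph {g\<in>dTt. Gt0 g = 0} Tt = graph {f\<in>dT. G0 f = 0} T"

end

theory Submission
  imports Defs "HOL-Analysis.Analysis"
begin


lemma infdist_approx:
  assumes "A \<noteq> {}" "e > 0"
  shows "\<exists>a\<in>A. dist x a < infdist x A + e"
proof -
  have "infdist x A < infdist x A + e" using assms by simp
  then have "(INF a\<in>A. dist x a) < infdist x A + e" using infdist_notempty[OF assms(1)] by simp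
  then show ?thesis
    using assms(1) by (subst (asm) cINF_less_iff) (auto intro: bdd_belowI[where m=0])
qed

lemma projection_exists:
  fixes N :: "'e::{real_inner,complete_space} set"
  assumes sub: "subspace N" and cl: "closed N"
  shows "\<exists>p\<in>N. \<forall>y\<in>N. inner (u - p) y = 0"
proof -
  define d where "d = infdist u N"
  have N0: "0 \<in> N" using sub by (simp add: subspace_0)
  have Nne: "N \<noteq> {}" using N0 by auto
  have d0: "d \<ge> 0" by (simp add: d_def infdist_nonneg)
  have dle: "d \<le> norm (u - y)" if "y \<in> N" for y
    using infdist_le[OF that, of u] by (simp add: d_def dist_norm)
  obtain y where yN: "\<And>k. y k \<in> N" and yd: "\<And>k. norm (u - y k) < d + 1 / (real k + 1)"
  proof -
    have "\<forall>k. \<exists>a\<in>N. dist u a < d + 1 / (real k + 1)"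
      using infdist_approx[OF Nne] by (simp add: d_def)
    then show ?thesis using that by (metis dist_norm)
  qed
  define eps where "eps k = 1 / (real k + 1)" for k
  have eps_pos: "eps k > 0" "eps k \<le> 1" for k by (auto simp: eps_def field_simps)
  have sq: "norm (u - y k)^2 \<le> d^2 + (2*d+1) * eps k" for k
  proof -
    have "norm (u - y k)^2 \<le> (d + eps k)^2"
      using yd[of k] norm_ge_zero by (intro power_mono) (auto simp: eps_def)
    also have "\<dots> = d^2 + (2*d + eps k) * eps k" by (simp add: power2_eq_square algebra_simps)
    also have "\<dots> \<le> d^2 + (2*d+1) * eps k" using eps_pos[of k] d0
      by (intro add_left_mono mult_right_mono) auto
    finally show ?thesis .
  qed
  have par: "norm (y k - y m)^2 \<le> 2*(2*d+1)*(eps k + eps m)" for k m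
  proof -
    have mid: "(1/2) *\<^sub>R (y k + y m) \<in> N"
      using sub yN by (simp add: subspace_add subspace_scale)
    have "2 * d \<le> norm (2 *\<^sub>R u - (y k + y m))"
    proof -
      have "d \<le> norm (u - (1/2) *\<^sub>R (y k + y m))" using dle[OF mid] .
      also have "norm (u - (1/2) *\<^sub>R (y k + y m)) = (1/2) * norm (2 *\<^sub>R u - (y k + y m))"
      proof -
        have "u - (1/2) *\<^sub>R (y k + y m) = (1/2) *\<^sub>R (2 *\<^sub>R u - (y k + y m))"
          by (simp add: algebra_simps)
        then show ?thesis by simp
      qed
      finally show ?thesis by simp
    qed
    then have "(2*d)^2 \<le> norm (2 *\<^sub>R u - (y k + y m))^2"
      using d0 by (intro power_mono) auto
    then have h2: "4 * d^2 \<le> norm (2 *\<^sub>R u - (y k + y m))^2"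
      by (simp add: power_mult_distrib)
    have pl: "norm (y k - y m)^2 = 2 * norm (u - y k)^2 + 2 * norm (u - y m)^2 - norm (2 *\<^sub>R u - (y k + y m))^2"
      by (simp add: power2_norm_eq_inner inner_diff_left inner_diff_right inner_add_left inner_add_right inner_commute algebra_simps)
    show ?thesis using pl h2 sq[of k] sq[of m] by (simp add: algebra_simps)
  qed
  have cauchy: "Cauchy y"
  proof (rule CauchyI)
    fix e :: real assume e: "e > 0"
    obtain M :: nat where M: "real M > 4*(2*d+1) / e^2" using reals_Archimedean2 by blast
    show "\<exists>M. \<forall>m\<ge>M. \<forall>n\<ge>M. norm (y m - y n) < e"
    proof (intro exI[of _ M] allI impI)
      fix m n assume mn: "m \<ge> M" "n \<ge> M"
      have em: "eps m \<le> 1 / (real M + 1)" "eps n \<le> 1 / (real M + 1)"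
        unfolding eps_def using mn by (auto intro!: divide_left_mono)
      have "norm (y m - y n)^2 \<le> 2*(2*d+1)*(eps m + eps n)" by (rule par)
      also have "\<dots> \<le> 2*(2*d+1)*(2 / (real M + 1))"
        using em d0 by (intro mult_left_mono) (auto simp: add_divide_distrib[symmetric])
      also have "\<dots> < e^2"
      proof -
        have e2: "e^2 > 0" using e by simp
        have "4*(2*d+1) < real M * e^2"
          using M by (simp only: pos_divide_less_eq[OF e2])
        then have "4*(2*d+1) < e^2 * (real M + 1)"
        proof -
          have "e^2 * (real M + 1) = real M * e^2 + e^2" by (simp add: algebra_simps)
          then show ?thesis using e2 \<open>4*(2*d+1) < real M * e^2\<close> by linarith
        qed
        moreover have "2*(2*d+1)*(2 / (real M + 1)) = (4*(2*d+1)) / (real M + 1)" by simp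
        ultimately show ?thesis by (simp only: pos_divide_less_eq)
      qed
      finally have "norm (y m - y n)^2 < e^2" .
      then show "norm (y m - y n) < e" by (rule power2_less_imp_less) (use e in linarith)
    qed
  qed
  then obtain p where yp: "y \<longlonglongrightarrow> p" using Cauchy_convergent unfolding convergent_def by blast
  have pN: "p \<in> N" using closed_sequentially[OF cl yN yp] .
  have dp: "norm (u - p) \<le> d"
  proof -
    have l1: "(\<lambda>k. norm (u - y k)) \<longlonglongrightarrow> norm (u - p)"
      by (intro tendsto_intros yp)
    have l2: "(\<lambda>k. d + 1 / (real k + 1)) \<longlonglongrightarrow> d"
      using LIMSEQ_inverse_real_of_nat_add[of d] by (simp add: inverse_eq_divide add.commute)
    show ?thesis
      using yd by (intro LIMSEQ_le[OF l1 l2]) (auto intro: less_imp_le)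
  qed
  show ?thesis
  proof (intro bexI[OF _ pN] ballI)
    fix z assume zN: "z \<in> N"
    define c where "c = inner (u - p) z"
    have ineq: "2 * t * c \<le> t^2 * inner z z" for t :: real
    proof -
      have "p + t *\<^sub>R z \<in> N" using sub pN zN by (simp add: subspace_add subspace_scale)
      then have "norm (u - p) \<le> norm (u - (p + t *\<^sub>R z))"
        using dle dp by fastforce
      then have "norm (u - p)^2 \<le> norm (u - (p + t *\<^sub>R z))^2"
        by (intro power_mono) auto
      moreover have "norm (u - (p + t *\<^sub>R z))^2 = norm (u - p)^2 - 2 * t * c + t^2 * inner z z"
      proof -
        define w where "w = u - p"
        have e1: "u - (p + t *\<^sub>R z) = w - t *\<^sub>R z" by (simp add: w_def algebra_simps)
        have e2: "norm (w - t *\<^sub>R z)^2 = norm w^2 - 2 * t * inner w z + t^2 * inner z z"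
          by (simp only: power2_norm_eq_inner) (simp add: inner_diff_left inner_diff_right inner_commute power2_eq_square algebra_simps)
        show ?thesis using e2 unfolding e1 c_def w_def .
      qed
      ultimately show ?thesis by linarith
    qed
    show "inner (u - p) z = 0"
    proof (cases "z = 0")
      case True then show ?thesis by simp
    next
      case False
      then have zz: "inner z z > 0" by simp
      have "2 * (c / inner z z) * c \<le> (c / inner z z)^2 * inner z z" by (rule ineq)
      then have "2 * c^2 / inner z z \<le> c^2 / inner z z" using zz
        by (simp add: power2_eq_square field_simps)
      then have "c^2 \<le> 0" using zz by (simp add: divide_le_cancel)
      then show ?thesis unfolding c_def by simp
    qed
  qed
qed




lemma ubp:
  fixes a :: "nat \<Rightarrow> 'e::{real_inner,complete_space}"
  assumes sub: "subspace V" and cl: "closed V"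
    and bd: "\<And>v. v \<in> V \<Longrightarrow> \<exists>C. \<forall>n. \<bar>inner (a n) v\<bar> \<le> C"
  shows "\<exists>M. \<forall>n. \<forall>v\<in>V. \<bar>inner (a n) v\<bar> \<le> M * norm v"
proof -
  define F where "F k = {v\<in>V. \<forall>n. \<bar>inner (a n) v\<bar> \<le> real k}" for k :: nat
  define X where "X = top_of_set V"
  have cm: "completely_metrizable_space X"
    unfolding X_def using completely_metrizable_space_closedin[OF completely_metrizable_space_euclidean closed_closedin[THEN iffD1, OF cl]] .
  have clF: "closedin X T" if "T \<in> range F" for T
  proof -
    obtain k where T: "T = F k" using \<open>T \<in> range F\<close> by blast
    have "closed {v. \<forall>n. \<bar>inner (a n) v\<bar> \<le> real k}"
    proof -
      have "{v. \<forall>n. \<bar>inner (a n) v\<bar> \<le> real k} = (\<Inter>n. {v. \<bar>inner (a n) v\<bar> \<le> real k})" by blast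
      moreover have "closed {v. \<bar>inner (a n) v\<bar> \<le> real k}" for n
        by (intro closed_Collect_le continuous_intros)
      ultimately show ?thesis by (simp add: closed_INT)
    qed
    then have "closedin X (V \<inter> {v. \<forall>n. \<bar>inner (a n) v\<bar> \<le> real k})"
      unfolding X_def by (rule closedin_closed_Int)
    moreover have "V \<inter> {v. \<forall>n. \<bar>inner (a n) v\<bar> \<le> real k} = T" by (auto simp: T F_def)
    ultimately show ?thesis by simp
  qed
  have un: "\<Union>(range F) = V"
  proof
    show "\<Union>(range F) \<subseteq> V" by (auto simp: F_def)
    show "V \<subseteq> \<Union>(range F)"
    proof
      fix v assume v: "v \<in> V"
      obtain C where C: "\<forall>n. \<bar>inner (a n) v\<bar> \<le> C" using bd[OF v] by blast
      have "C \<le> real (nat \<lceil>C\<rceil>)" by linarith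
      then have "\<forall>n. \<bar>inner (a n) v\<bar> \<le> real (nat \<lceil>C\<rceil>)" using C by (meson order_trans)
      then have "v \<in> F (nat \<lceil>C\<rceil>)" using v unfolding F_def by blast
      then show "v \<in> \<Union>(range F)" by blast
    qed
  qed
  have V0: "0 \<in> V" using sub by (simp add: subspace_0)
  have tX: "topspace X = V" by (simp add: X_def)
  have ne: "X interior_of \<Union>(range F) \<noteq> {}"
    using V0 un tX interior_of_topspace[of X] by auto
  have "\<exists>k. X interior_of F k \<noteq> {}"
  proof (rule ccontr)
    assume "\<not> (\<exists>k. X interior_of F k \<noteq> {})"
    then have "\<And>T. T \<in> range F \<Longrightarrow> closedin X T \<and> X interior_of T = {}" using clF by blast
    then have "X interior_of \<Union>(range F) = {}"
      using cm by (intro Baire_category_alt) auto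
    then show False using ne by blast
  qed
  then obtain k where "X interior_of F k \<noteq> {}" by blast
  then obtain v0 T where T: "openin X T" "v0 \<in> T" "T \<subseteq> F k"
    unfolding interior_of_def by blast
  obtain Ob where O: "open Ob" "T = V \<inter> Ob" using T(1) unfolding X_def openin_open by blast
  obtain r where r: "r > 0" "ball v0 r \<subseteq> Ob" using O T(2) open_contains_ball by blast
  have v0: "v0 \<in> F k" using T by blast
  then have v0V: "v0 \<in> V" by (simp add: F_def)
  have small: "\<bar>inner (a n) w\<bar> \<le> 2 * real k" if "w \<in> V" "norm w < r" for w n
  proof -
    have "v0 + w \<in> V" using sub v0V that(1) by (simp add: subspace_add)
    moreover have "v0 + w \<in> ball v0 r" using that(2) by (simp add: dist_norm)
    ultimately have "v0 + w \<in> F k" using T O r by blast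
    then have "\<bar>inner (a n) (v0 + w)\<bar> \<le> real k" by (simp add: F_def)
    moreover have "\<bar>inner (a n) v0\<bar> \<le> real k" using v0 by (simp add: F_def)
    ultimately show ?thesis by (simp add: inner_add_right)
  qed
  show ?thesis
  proof (intro exI[of _ "4 * real k / r"] allI ballI)
    fix n v assume v: "v \<in> V"
    show "\<bar>inner (a n) v\<bar> \<le> 4 * real k / r * norm v"
    proof (cases "v = 0")
      case True then show ?thesis by simp
    next
      case False
      then have nv: "norm v > 0" by simp
      define c where "c = r / (2 * norm v)"
      have c: "c > 0" using r nv by (simp add: c_def)
      have "c *\<^sub>R v \<in> V" using sub v by (simp add: subspace_scale)
      moreover have "norm (c *\<^sub>R v) < r" using c nv r by (simp add: c_def)
      ultimately have "\<bar>inner (a n) (c *\<^sub>R v)\<bar> \<le> 2 * real k" by (rule small)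
      then have "c * \<bar>inner (a n) v\<bar> \<le> 2 * real k" using c by (simp add: abs_mult)
      then have "\<bar>inner (a n) v\<bar> \<le> 2 * real k / c" using c by (simp add: field_simps)
      also have "2 * real k / c = 4 * real k / r * norm v" using r nv by (simp add: c_def field_simps)
      finally show ?thesis .
    qed
  qed
qed

lemma riesz_subspace:
  fixes l :: "'e::{real_inner,complete_space} \<Rightarrow> real"
  assumes sub: "subspace V" and cl: "closed V"
    and ladd: "\<And>v w. v \<in> V \<Longrightarrow> w \<in> V \<Longrightarrow> l (v + w) = l v + l w"
    and lscale: "\<And>c v. v \<in> V \<Longrightarrow> l (c *\<^sub>R v) = c * l v"
    and bnd: "\<And>v. v \<in> V \<Longrightarrow> \<bar>l v\<bar> \<le> M * norm v"
  shows "\<exists>b. \<forall>v\<in>V. l v = inner b v"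
proof (cases "\<forall>v\<in>V. l v = 0")
  case True then show ?thesis by (intro exI[of _ 0]) simp
next
  case False
  then obtain u where u: "u \<in> V" "l u \<noteq> 0" by blast
  have ldiff: "l (v - w) = l v - l w" if "v \<in> V" "w \<in> V" for v w
  proof -
    have "(-1) *\<^sub>R w \<in> V" using subspace_scale[OF sub that(2), of "-1"] .
    then have "l (v + (-1) *\<^sub>R w) = l v + l ((-1) *\<^sub>R w)" using ladd that by blast
    then show ?thesis using lscale[OF that(2), of "-1"] by simp
  qed
  define N where "N = {v\<in>V. l v = 0}"
  have l0: "l 0 = 0" using lscale[of 0 0] sub by (simp add: subspace_0)
  have subN: "subspace N"
    unfolding subspace_def N_def using sub l0 ladd lscale
    by (auto simp: subspace_0 subspace_add subspace_scale)
  have clN: "closed N"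
    unfolding closed_sequential_limits
  proof (intro allI impI, elim conjE)
    fix x y assume xN: "\<forall>n. x n \<in> N" and xy: "x \<longlonglongrightarrow> y"
    have yV: "y \<in> V" using closed_sequentially[OF cl _ xy] xN by (auto simp: N_def)
    have "\<bar>l y\<bar> \<le> M * norm (y - x n)" for n
    proof -
      have "l (y - x n) = l y" using ldiff[OF yV, of "x n"] xN by (auto simp: N_def)
      then show ?thesis using bnd[of "y - x n"] sub yV xN by (auto simp: N_def subspace_diff)
    qed
    moreover have "(\<lambda>n. M * norm (y - x n)) \<longlonglongrightarrow> M * norm (y - y)"
      by (intro tendsto_intros xy)
    ultimately have "\<bar>l y\<bar> \<le> M * norm (y - y)"
      by (intro LIMSEQ_le_const) auto
    then show "y \<in> N" using yV by (simp add: N_def)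
  qed
  obtain p where pN: "p \<in> N" and orth: "\<forall>y\<in>N. inner (u - p) y = 0"
    using projection_exists[OF subN clN] by blast
  define z where "z = u - p"
  have pV: "p \<in> V" "l p = 0" using pN by (auto simp: N_def)
  have zV: "z \<in> V" using sub u pV by (simp add: z_def subspace_diff)
  have lz: "l z = l u" using ldiff[OF u(1) pV(1)] pV by (simp add: z_def)
  have znz: "z \<noteq> 0" using lz u l0 by auto
  have zz: "inner z z > 0" using znz by simp
  show ?thesis
  proof (intro exI[of _ "(l z / inner z z) *\<^sub>R z"] ballI)
    fix v assume v: "v \<in> V"
    define y where "y = v - (l v / l z) *\<^sub>R z"
    have sV: "(l v / l z) *\<^sub>R z \<in> V" using sub zV by (simp add: subspace_scale)
    have yV: "y \<in> V" using sub v sV by (simp add: y_def subspace_diff)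
    have "l y = l v - (l v / l z) * l z" using ldiff[OF v sV] lscale[OF zV] by (simp add: y_def)
    then have "l y = 0" using lz u by simp
    then have "y \<in> N" using yV by (simp add: N_def)
    then have "inner z y = 0" using orth by (simp add: z_def)
    then have "inner z v = (l v / l z) * inner z z" by (simp add: y_def inner_diff_right)
    then show "l v = inner ((l z / inner z z) *\<^sub>R z) v"
      using zz lz u by (simp add: field_simps)
  qed
qed

lemma weak_limit:
  fixes a :: "nat \<Rightarrow> 'e::{real_inner,complete_space}"
  assumes sub: "subspace V" and cl: "closed V"
    and conv: "\<And>v. v \<in> V \<Longrightarrow> convergent (\<lambda>n. inner (a n) v)"
  shows "\<exists>b. \<forall>v\<in>V. (\<lambda>n. inner (a n) v) \<longlonglongrightarrow> inner b v"
proof -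
  define l where "l v = lim (\<lambda>n. inner (a n) v)" for v
  have lv: "(\<lambda>n. inner (a n) v) \<longlonglongrightarrow> l v" if "v \<in> V" for v
    using conv[OF that] by (simp add: l_def convergent_LIMSEQ_iff)
  have bd: "\<exists>C. \<forall>n. \<bar>inner (a n) v\<bar> \<le> C" if "v \<in> V" for v
    using convergent_imp_Bseq[OF conv[OF that]] unfolding Bseq_def by auto
  obtain M where M: "\<And>n v. v \<in> V \<Longrightarrow> \<bar>inner (a n) v\<bar> \<le> M * norm v"
    using ubp[OF sub cl bd] by blast
  have ladd: "l (v + w) = l v + l w" if "v \<in> V" "w \<in> V" for v w
  proof -
    have "v + w \<in> V" using sub that by (simp add: subspace_add)
    from lv[OF this] have "(\<lambda>n. inner (a n) v + inner (a n) w) \<longlonglongrightarrow> l (v + w)"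
      by (simp add: inner_add_right)
    moreover have "(\<lambda>n. inner (a n) v + inner (a n) w) \<longlonglongrightarrow> l v + l w"
      using lv that by (intro tendsto_add) auto
    ultimately show ?thesis using LIMSEQ_unique by blast
  qed
  have lscale: "l (c *\<^sub>R v) = c * l v" if "v \<in> V" for c v
  proof -
    have "c *\<^sub>R v \<in> V" using sub that by (simp add: subspace_scale)
    from lv[OF this] have "(\<lambda>n. c * inner (a n) v) \<longlonglongrightarrow> l (c *\<^sub>R v)"
      by simp
    moreover have "(\<lambda>n. c * inner (a n) v) \<longlonglongrightarrow> c * l v"
      using lv[OF that] by (intro tendsto_mult_left)
    ultimately show ?thesis using LIMSEQ_unique by blast
  qed
  have lbnd: "\<bar>l v\<bar> \<le> M * norm v" if "v \<in> V" for v
  proof -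
    have "(\<lambda>n. \<bar>inner (a n) v\<bar>) \<longlonglongrightarrow> \<bar>l v\<bar>" using lv[OF that] by (rule tendsto_rabs)
    then show ?thesis using M[OF that] by (intro LIMSEQ_le_const2) auto
  qed
  obtain b where b: "\<forall>v\<in>V. l v = inner b v"
    using riesz_subspace[OF sub cl ladd lscale lbnd] by blast
  show ?thesis using lv b by auto
qed




lemma inner_iunit_left: "inner (iunit x) y = - inner x (iunit (y::'a::chilbert_space))"
proof -
  have "inner (iunit x) y = inner (iunit (iunit x)) (iunit y)" by (rule iunit_inner[symmetric])
  also have "\<dots> = inner (-x) (iunit y)" by (simp add: iunit_iunit)
  finally show ?thesis by simp
qed

lemma Re_cinner [simp]: "Re (cinner x y) = inner x y"
  by (simp add: cinner_def)

lemma cscale_ii: "cscale \<i> x = iunit x" by (simp add: cscale_def)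
lemma cscale_real: "cscale (complex_of_real r) x = r *\<^sub>R x" by (simp add: cscale_def)

lemma clin_facts:
  assumes "clinear_on D A"
  shows clin_0: "0 \<in> D" and clin_add: "x \<in> D \<Longrightarrow> y \<in> D \<Longrightarrow> x + y \<in> D"
    and clin_Aadd: "x \<in> D \<Longrightarrow> y \<in> D \<Longrightarrow> A (x + y) = A x + A y"
    and clin_scale: "x \<in> D \<Longrightarrow> r *\<^sub>R x \<in> D"
    and clin_Ascale: "x \<in> D \<Longrightarrow> A (r *\<^sub>R x) = r *\<^sub>R A x"
    and clin_iunit: "x \<in> D \<Longrightarrow> iunit x \<in> D"
    and clin_Aiunit: "x \<in> D \<Longrightarrow> A (iunit x) = iunit (A x)"
  using assms unfolding clinear_on_def csubspace_def
  by (metis cscale_real cscale_ii)+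

lemma clin_A0: "clinear_on D A \<Longrightarrow> A 0 = 0"
  using clin_Ascale[of D A 0 0] clin_0[of D A] by simp

lemma clin_diff:
  assumes "clinear_on D A" "x \<in> D" "y \<in> D"
  shows "x - y \<in> D" "A (x - y) = A x - A y"
proof -
  have ny: "-y \<in> D" "A (-y) = - A y"
    using clin_scale[OF assms(1,3), of "-1"] clin_Ascale[OF assms(1,3), of "-1"] by simp_all
  show "x - y \<in> D" using clin_add[OF assms(1,2) ny(1)] by simp
  show "A (x - y) = A x - A y" using clin_Aadd[OF assms(1,2) ny(1)] ny(2) by simp
qed

lemma clin_subspace: "clinear_on D A \<Longrightarrow> subspace D"
  unfolding subspace_def by (auto intro: clin_0 clin_add clin_scale)

lemma graph_subspace:
  assumes "clinear_on D A"
  shows "subspace (graph D A)"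
  unfolding subspace_def graph_def
proof (intro conjI ballI allI)
  have "(0::'a\<times>'b) = (0, A 0)" using clin_A0[OF assms] by (simp add: zero_prod_def)
  then show "0 \<in> {(x, A x) |x. x \<in> D}" using clin_0[OF assms] by blast
next
  fix p q assume "p \<in> {(x, A x) |x. x \<in> D}" "q \<in> {(x, A x) |x. x \<in> D}"
  then obtain x y where "p = (x, A x)" "q = (y, A y)" "x \<in> D" "y \<in> D" by blast
  then show "p + q \<in> {(x, A x) |x. x \<in> D}"
    using clin_add[OF assms] clin_Aadd[OF assms] by force
next
  fix c :: real and p assume "p \<in> {(x, A x) |x. x \<in> D}"
  then obtain x where "p = (x, A x)" "x \<in> D" by blast
  then show "c *\<^sub>R p \<in> {(x, A x) |x. x \<in> D}"
    using clin_scale[OF assms] clin_Ascale[OF assms] by force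
qed

lemma iunit_zero [simp]: "iunit 0 = 0"
  using iunit_scaleR[of 0 0] by simp

lemma cscale_zero [simp]: "cscale c 0 = 0"
  by (simp add: cscale_def)

lemma clinear_ker:
  assumes A: "clinear_on D A" and B: "clinear_on D B"
  shows "clinear_on {x\<in>D. B x = 0} A"
proof -
  have B0: "B 0 = 0" by (rule clin_A0[OF B])
  show ?thesis
    using A B B0 unfolding clinear_on_def csubspace_def by auto
qed

lemma adj_real:
  assumes "clinear_on D A"
  shows "(y, z) \<in> adjoint_graph D A \<longleftrightarrow> (\<forall>x\<in>D. inner (A x) y = inner x z)"
proof
  assume "(y, z) \<in> adjoint_graph D A"
  then have "\<forall>x\<in>D. cinner (A x) y = cinner x z" by (simp add: adjoint_graph_def)
  then show "\<forall>x\<in>D. inner (A x) y = inner x z" by (auto simp: cinner_def)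
next
  assume H: "\<forall>x\<in>D. inner (A x) y = inner x z"
  show "(y, z) \<in> adjoint_graph D A" unfolding adjoint_graph_def
  proof (clarsimp)
    fix x assume x: "x \<in> D"
    have ix: "iunit x \<in> D" and Aix: "A (iunit x) = iunit (A x)"
      using clin_iunit[OF assms x] clin_Aiunit[OF assms x] by auto
    have "inner (iunit (A x)) y = inner (iunit x) z" using H ix Aix by metis
    then have "inner (A x) (iunit y) = inner x (iunit z)" by (simp add: inner_iunit_left)
    then show "cinner (A x) y = cinner x z" using H x by (simp add: cinner_def)
  qed
qed




definition om :: "('g::real_inner \<times> 'g) \<Rightarrow> ('g \<times> 'g) \<Rightarrow> real" where
  "om p q = inner (snd p) (fst q) - inner (fst p) (snd q)"

lemma om_diff_left: "om (p - p') q = om p q - om p' q"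
  by (simp add: om_def inner_diff_left)

lemma om_zero_right [simp]: "om p 0 = 0"
  by (simp add: om_def)

lemma om_swap: "om p q = - om q p"
  by (simp add: om_def inner_commute)

lemma DD_zero:
  fixes w :: "'g::real_inner \<times> 'g"
  assumes cl: "closure P = UNIV" and z: "\<forall>p\<in>P. om p w = 0"
  shows "w = 0"
proof -
  have "closed {p. om p w = 0}"
    unfolding om_def by (intro closed_Collect_eq continuous_intros)
  moreover have "P \<subseteq> {p. om p w = 0}" using z by blast
  ultimately have "closure P \<subseteq> {p. om p w = 0}" by (rule closure_minimal[rotated])
  then have "om (- snd w, fst w) w = 0" using cl by blast
  then have "inner (fst w) (fst w) + inner (snd w) (snd w) = 0" by (simp add: om_def)
  then have "fst w = 0 \<and> snd w = 0"
    by (metis add_nonneg_eq_0_iff inner_ge_zero inner_eq_zero_iff)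
  then show ?thesis by (simp add: prod_eq_iff)
qed

lemma DD_zero2:
  fixes w :: "'g::real_inner \<times> 'g"
  assumes cl: "closure Q = UNIV" and z: "\<forall>q\<in>Q. om w q = 0"
  shows "w = 0"
  using DD_zero[OF cl] z by (simp add: om_swap[of w])

lemma half_i_ii:
  fixes T Tt S :: "'a::{real_inner,complete_space} \<Rightarrow> 'a"
    and G0 G1 Gt0 Gt1 :: "'a \<Rightarrow> 'g::{real_inner,complete_space}"
  assumes green: "\<And>f g. f \<in> dT \<Longrightarrow> g \<in> dTt \<Longrightarrow>
      inner (T f) g - inner f (Tt g) = inner (G1 f) (Gt0 g) - inner (G0 f) (Gt1 g)"
    and DD: "closure ((\<lambda>f. (G0 f, G1 f)) ` dT) = UNIV"
    and DDt: "closure ((\<lambda>g. (Gt0 g, Gt1 g)) ` dTt) = UNIV"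
    and subV: "subspace (graph dTt Tt)" and clV: "closed (graph dTt Tt)"
    and Tmax: "\<And>f f'. (\<forall>g\<in>dS. inner (S g) f = inner g f') \<Longrightarrow> f \<in> dT \<and> T f = f'"
    and SinTt: "\<And>g. g \<in> dS \<Longrightarrow> g \<in> dTt \<and> Tt g = S g"
    and Tsub: "\<And>f g. f \<in> dT \<Longrightarrow> g \<in> dS \<Longrightarrow> inner (S g) f = inner g (T f)"
  shows "(\<lambda>f. (G0 f, G1 f)) ` dT = UNIV"
proof -
  have greenom: "inner (T f) g - inner f (Tt g) = om (G0 f, G1 f) (Gt0 g, Gt1 g)"
    if "f \<in> dT" "g \<in> dTt" for f g
    using green[OF that] by (simp add: om_def)
  have Gt_dS: "(Gt0 g, Gt1 g) = 0" if g: "g \<in> dS" for g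
  proof (rule DD_zero[OF DD], intro ballI)
    fix p assume "p \<in> (\<lambda>f. (G0 f, G1 f)) ` dT"
    then obtain h where h: "h \<in> dT" "p = (G0 h, G1 h)" by blast
    have gT: "g \<in> dTt" "Tt g = S g" using SinTt[OF g] by auto
    have "om p (Gt0 g, Gt1 g) = inner (T h) g - inner h (S g)"
      using greenom[OF h(1) gT(1)] gT(2) h(2) by simp
    also have "\<dots> = 0" using Tsub[OF h(1) g] by (simp add: inner_commute)
    finally show "om p (Gt0 g, Gt1 g) = 0" .
  qed
  show ?thesis
  proof (rule set_eqI, rule iffI)
    fix w0 :: "'g \<times> 'g"
    show "w0 \<in> (\<lambda>f. (G0 f, G1 f)) ` dT" if "w0 \<in> UNIV"
    proof -
      have "w0 \<in> closure ((\<lambda>f. (G0 f, G1 f)) ` dT)" using DD by simp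
      then obtain x where x: "\<And>n. x n \<in> (\<lambda>f. (G0 f, G1 f)) ` dT" and xw: "x \<longlonglongrightarrow> w0"
        unfolding closure_sequential by blast
      have "\<forall>n. \<exists>h. h \<in> dT \<and> x n = (G0 h, G1 h)" using x by blast
      then obtain h where "\<forall>n. h n \<in> dT \<and> x n = (G0 (h n), G1 (h n))"
        using choice[of "\<lambda>n h. h \<in> dT \<and> x n = (G0 h, G1 h)"] by blast
      then have h: "\<And>n. h n \<in> dT" "\<And>n. x n = (G0 (h n), G1 (h n))" by auto
      define a where "a n = (T (h n), - h n)" for n
      have lim: "(\<lambda>n. inner (a n) (g, Tt g)) \<longlonglongrightarrow> om w0 (Gt0 g, Gt1 g)" if g: "g \<in> dTt" for g
      proof -
        have "(\<lambda>n. om (x n) (Gt0 g, Gt1 g)) \<longlonglongrightarrow> om w0 (Gt0 g, Gt1 g)"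
          unfolding om_def by (intro tendsto_intros xw)
        moreover have "inner (a n) (g, Tt g) = om (x n) (Gt0 g, Gt1 g)" for n
          using greenom[OF h(1)[of n] g] h(2)[of n] by (simp add: a_def inner_Pair)
        ultimately show ?thesis by simp
      qed
      have conv: "convergent (\<lambda>n. inner (a n) v)" if v: "v \<in> graph dTt Tt" for v
      proof -
        obtain g where "g \<in> dTt" "v = (g, Tt g)" using v unfolding graph_def by blast
        then show ?thesis using lim unfolding convergent_def by blast
      qed
      obtain b where b: "\<forall>v\<in>graph dTt Tt. (\<lambda>n. inner (a n) v) \<longlonglongrightarrow> inner b v"
        using weak_limit[OF subV clV conv] by blast
      define f' where "f' = fst b"
      define f where "f = - snd b"
      have star: "inner f' g - inner f (Tt g) = om w0 (Gt0 g, Gt1 g)" if g: "g \<in> dTt" for g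
      proof -
        have "(g, Tt g) \<in> graph dTt Tt" using g unfolding graph_def by blast
        then have "(\<lambda>n. inner (a n) (g, Tt g)) \<longlonglongrightarrow> inner b (g, Tt g)" using b by blast
        then have "inner b (g, Tt g) = om w0 (Gt0 g, Gt1 g)" using lim[OF g] LIMSEQ_unique by blast
        then show ?thesis by (simp add: f'_def f_def inner_prod_def inner_commute)
      qed
      have "f \<in> dT \<and> T f = f'"
      proof (rule Tmax, intro ballI)
        fix g assume g: "g \<in> dS"
        have gT: "g \<in> dTt" "Tt g = S g" using SinTt[OF g] by auto
        have "inner f' g - inner f (S g) = 0" using star[OF gT(1)] gT(2) Gt_dS[OF g] by simp
        then show "inner (S g) f = inner g f'" by (simp add: inner_commute)
      qed
      then have fT: "f \<in> dT" "T f = f'" by auto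
      have "(G0 f, G1 f) - w0 = 0"
      proof (rule DD_zero2[OF DDt], intro ballI)
        fix q assume "q \<in> (\<lambda>g. (Gt0 g, Gt1 g)) ` dTt"
        then obtain g where g: "g \<in> dTt" "q = (Gt0 g, Gt1 g)" by blast
        show "om ((G0 f, G1 f) - w0) q = 0"
          using greenom[OF fT(1) g(1)] star[OF g(1)] fT(2) g(2) by (simp add: om_diff_left)
      qed
      then show ?thesis using fT(1) by force
    qed
  qed simp
qed

lemma half_ii_i:
  fixes T Tt :: "'a::{real_inner,complete_space} \<Rightarrow> 'a"
    and G0 G1 Gt0 Gt1 :: "'a \<Rightarrow> 'g::{real_inner,complete_space}"
  assumes green: "\<And>f g. f \<in> dT \<Longrightarrow> g \<in> dTt \<Longrightarrow>
      inner (T f) g - inner f (Tt g) = inner (G1 f) (Gt0 g) - inner (G0 f) (Gt1 g)"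
    and surj: "(\<lambda>f. (G0 f, G1 f)) ` dT = UNIV"
    and surjt: "(\<lambda>g. (Gt0 g, Gt1 g)) ` dTt = UNIV"
    and Mr: "\<And>y z. (\<forall>g\<in>dTt. Gt0 g = 0 \<longrightarrow> inner (Tt g) y = inner g z) \<Longrightarrow> y \<in> dT \<and> T y = z"
    and addT: "\<And>x y. x \<in> dT \<Longrightarrow> y \<in> dT \<Longrightarrow> x + y \<in> dT \<and> T (x + y) = T x + T y"
  shows "closure (graph dT T) \<subseteq> graph dT T"
proof
  have greenom: "inner (T f) g - inner f (Tt g) = om (G0 f, G1 f) (Gt0 g, Gt1 g)"
    if "f \<in> dT" "g \<in> dTt" for f g
    using green[OF that] by (simp add: om_def)
  fix ff assume "ff \<in> closure (graph dT T)"
  then obtain x where x: "\<And>n. x n \<in> graph dT T" and xf: "x \<longlonglongrightarrow> ff"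
    unfolding closure_sequential by blast
  obtain f f' where ff: "ff = (f, f')" by (cases ff)
  define h where "h n = fst (x n)" for n
  have hx: "h n \<in> dT \<and> x n = (h n, T (h n))" for n
    using x[of n] unfolding graph_def h_def by auto
  then have h: "\<And>n. h n \<in> dT" "\<And>n. x n = (h n, T (h n))" by auto
  define a where "a n = (G1 (h n), - G0 (h n))" for n
  have lim: "(\<lambda>n. inner (a n) (Gt0 g, Gt1 g)) \<longlonglongrightarrow> inner f' g - inner f (Tt g)" if g: "g \<in> dTt" for g
  proof -
    have "(\<lambda>n. inner (snd (x n)) g - inner (fst (x n)) (Tt g)) \<longlonglongrightarrow> inner (snd ff) g - inner (fst ff) (Tt g)"
      by (intro tendsto_intros xf)
    moreover have "inner (a n) (Gt0 g, Gt1 g) = inner (snd (x n)) g - inner (fst (x n)) (Tt g)" for n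
      using greenom[OF h(1)[of n] g] h(2)[of n] by (simp add: a_def om_def)
    ultimately show ?thesis using ff by simp
  qed
  have conv: "convergent (\<lambda>n. inner (a n) w)" if "w \<in> UNIV" for w
  proof -
    have "w \<in> (\<lambda>g. (Gt0 g, Gt1 g)) ` dTt" using surjt by simp
    then obtain g where "g \<in> dTt" "w = (Gt0 g, Gt1 g)" by blast
    then show ?thesis using lim unfolding convergent_def by blast
  qed
  obtain b where b: "\<forall>w\<in>UNIV. (\<lambda>n. inner (a n) w) \<longlonglongrightarrow> inner b w"
    using weak_limit[OF subspace_UNIV closed_UNIV conv] by blast
  define w1 where "w1 = (- snd b, fst b)"
  have star: "inner f' g - inner f (Tt g) = om w1 (Gt0 g, Gt1 g)" if g: "g \<in> dTt" for g
  proof -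
    have "inner b (Gt0 g, Gt1 g) = inner f' g - inner f (Tt g)"
      using b lim[OF g] LIMSEQ_unique by blast
    then show ?thesis by (simp add: w1_def om_def inner_prod_def)
  qed
  have "w1 \<in> (\<lambda>f. (G0 f, G1 f)) ` dT" using surj by simp
  then obtain h0 where h0: "h0 \<in> dT" "(G0 h0, G1 h0) = w1" by force
  have "f - h0 \<in> dT \<and> T (f - h0) = f' - T h0"
  proof (rule Mr, intro ballI impI)
    fix g assume g: "g \<in> dTt" "Gt0 g = 0"
    have "inner (f' - T h0) g - inner (f - h0) (Tt g) = 0"
      using star[OF g(1)] greenom[OF h0(1) g(1)] h0(2)
      by (simp add: inner_diff_left inner_diff_right)
    then show "inner (Tt g) (f - h0) = inner g (f' - T h0)" by (simp add: inner_commute)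
  qed
  then have "f \<in> dT \<and> T f = f'" using addT[OF _ h0(1), of "f - h0"] by auto
  then show "ff \<in> graph dT T" using ff unfolding graph_def by blast
qed




theorem proposition2p6:
  fixes dS dSt dT dTt :: "'a::chilbert_space set"
    and S St T Tt :: "'a \<Rightarrow> 'a"
    and G0 G1 Gt0 Gt1 :: "'a \<Rightarrow> 'g::chilbert_space"
  assumes separable: "\<exists>D::'a set. countable D \<and> closure D = UNIV"
    and pair: "adjoint_pair dS S dSt St"
    and coreT: "core_of_adjoint dT T dS S"
    and coreTt: "core_of_adjoint dTt Tt dSt St"
    and qbt: "quasi_boundary_triple dT T dTt Tt G0 G1 Gt0 Gt1"
  shows "(graph dT T = adjoint_graph dS S \<and> graph dTt Tt = adjoint_graph dSt St)
     \<longleftrightarrow> ((\<lambda>f. (G0 f, G1 f)) ` dT = UNIV \<and> (\<lambda>g. (Gt0 g, Gt1 g)) ` dTt = UNIV)"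
proof -
  have linS: "clinear_on dS S" and linSt: "clinear_on dSt St"
    and pairc: "\<And>f g. f \<in> dS \<Longrightarrow> g \<in> dSt \<Longrightarrow> cinner (S f) g = cinner f (St g)"
    using pair unfolding adjoint_pair_def densely_defined_def linear_operator_def by auto
  have linT: "clinear_on dT T" and subT: "graph dT T \<subseteq> adjoint_graph dS S"
    and clT: "closure (graph dT T) = adjoint_graph dS S"
    using coreT unfolding core_of_adjoint_def linear_operator_def by auto
  have linTt: "clinear_on dTt Tt" and subTt: "graph dTt Tt \<subseteq> adjoint_graph dSt St"
    and clTt: "closure (graph dTt Tt) = adjoint_graph dSt St"
    using coreTt unfolding core_of_adjoint_def linear_operator_def by auto
  have linG0: "clinear_on dT G0" and linGt0: "clinear_on dTt Gt0"
    and greenC: "\<And>f g. f \<in> dT \<Longrightarrow> g \<in> dTt \<Longrightarrow> cinner (T f) g - cinner f (Tt g)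
         = cinner (G1 f) (Gt0 g) - cinner (G0 f) (Gt1 g)"
    and DD: "closure ((\<lambda>f. (G0 f, G1 f)) ` dT) = UNIV"
    and DDt: "closure ((\<lambda>g. (Gt0 g, Gt1 g)) ` dTt) = UNIV"
    and M1: "adjoint_graph {f\<in>dT. G0 f = 0} T = graph {g\<in>dTt. Gt0 g = 0} Tt"
    and M2: "adjoint_graph {g\<in>dTt. Gt0 g = 0} Tt = graph {f\<in>dT. G0 f = 0} T"
    using qbt unfolding quasi_boundary_triple_def by auto
  have greenR: "inner (T f) g - inner f (Tt g) = inner (G1 f) (Gt0 g) - inner (G0 f) (Gt1 g)"
    if "f \<in> dT" "g \<in> dTt" for f g
    using arg_cong[OF greenC[OF that], of Re] by simp
  have greenR2: "inner (Tt g) f - inner g (T f) = inner (Gt1 g) (G0 f) - inner (Gt0 g) (G1 f)"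
    if "g \<in> dTt" "f \<in> dT" for f g
    using greenR[OF that(2,1)] by (simp add: inner_commute)
  have pairR: "inner (S f) g = inner f (St g)" if "f \<in> dS" "g \<in> dSt" for f g
    using arg_cong[OF pairc[OF that], of Re] by simp
  have MrT: "y \<in> dT \<and> T y = z" if H: "\<forall>g\<in>dTt. Gt0 g = 0 \<longrightarrow> inner (Tt g) y = inner g z" for y z
  proof -
    have "clinear_on {g\<in>dTt. Gt0 g = 0} Tt" by (rule clinear_ker[OF linTt linGt0])
    then have "(y, z) \<in> adjoint_graph {g\<in>dTt. Gt0 g = 0} Tt" using H by (subst adj_real) auto
    then show ?thesis unfolding M2 graph_def by auto
  qed
  have MrTt: "y \<in> dTt \<and> Tt y = z" if H: "\<forall>g\<in>dT. G0 g = 0 \<longrightarrow> inner (T g) y = inner g z" for y z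
  proof -
    have "clinear_on {g\<in>dT. G0 g = 0} T" by (rule clinear_ker[OF linT linG0])
    then have "(y, z) \<in> adjoint_graph {g\<in>dT. G0 g = 0} T" using H by (subst adj_real) auto
    then show ?thesis unfolding M1 graph_def by auto
  qed
  have addT: "x + y \<in> dT \<and> T (x + y) = T x + T y" if "x \<in> dT" "y \<in> dT" for x y
    using clin_add[OF linT that] clin_Aadd[OF linT that] by auto
  have addTt: "x + y \<in> dTt \<and> Tt (x + y) = Tt x + Tt y" if "x \<in> dTt" "y \<in> dTt" for x y
    using clin_add[OF linTt that] clin_Aadd[OF linTt that] by auto
  have Tsub: "inner (S g) f = inner g (T f)" if "f \<in> dT" "g \<in> dS" for f g
  proof -
    have "(f, T f) \<in> adjoint_graph dS S" using subT that(1) unfolding graph_def by blast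
    then show ?thesis using adj_real[OF linS] that(2) by blast
  qed
  have Tsub': "inner (St g) f = inner g (Tt f)" if "f \<in> dTt" "g \<in> dSt" for f g
  proof -
    have "(f, Tt f) \<in> adjoint_graph dSt St" using subTt that(1) unfolding graph_def by blast
    then show ?thesis using adj_real[OF linSt] that(2) by blast
  qed
  show ?thesis
  proof
    assume I: "graph dT T = adjoint_graph dS S \<and> graph dTt Tt = adjoint_graph dSt St"
    have Tmax: "f \<in> dT \<and> T f = f'" if "\<forall>g\<in>dS. inner (S g) f = inner g f'" for f f'
    proof -
      have "(f, f') \<in> adjoint_graph dS S" using adj_real[OF linS] that by blast
      then have "(f, f') \<in> graph dT T" using I by simp
      then show ?thesis unfolding graph_def by auto
    qed
    have Ttmax: "f \<in> dTt \<and> Tt f = f'" if "\<forall>g\<in>dSt. inner (St g) f = inner g f'" for f f'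
    proof -
      have "(f, f') \<in> adjoint_graph dSt St" using adj_real[OF linSt] that by blast
      then have "(f, f') \<in> graph dTt Tt" using I by simp
      then show ?thesis unfolding graph_def by auto
    qed
    have SinTt: "g \<in> dTt \<and> Tt g = S g" if "g \<in> dS" for g
      using Ttmax[of g "S g"] pairR[OF that] by (simp add: inner_commute)
    have StinT: "g \<in> dT \<and> T g = St g" if "g \<in> dSt" for g
      using Tmax[of g "St g"] pairR[OF _ that] by (simp add: inner_commute)
    have clV: "closed (graph dTt Tt)" using I clTt by (metis closed_closure)
    have clV': "closed (graph dT T)" using I clT by (metis closed_closure)
    have r1: "(\<lambda>f. (G0 f, G1 f)) ` dT = UNIV"
      by (rule half_i_ii[OF greenR DD DDt graph_subspace[OF linTt] clV Tmax SinTt Tsub])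
    have r2: "(\<lambda>g. (Gt0 g, Gt1 g)) ` dTt = UNIV"
      by (rule half_i_ii[OF greenR2 DDt DD graph_subspace[OF linT] clV' Ttmax StinT Tsub'])
    show "(\<lambda>f. (G0 f, G1 f)) ` dT = UNIV \<and> (\<lambda>g. (Gt0 g, Gt1 g)) ` dTt = UNIV"
      using r1 r2 by blast
  next
    assume II: "(\<lambda>f. (G0 f, G1 f)) ` dT = UNIV \<and> (\<lambda>g. (Gt0 g, Gt1 g)) ` dTt = UNIV"
    have c1: "closure (graph dT T) \<subseteq> graph dT T"
      using half_ii_i[OF greenR _ _ MrT addT] II by blast
    have c2: "closure (graph dTt Tt) \<subseteq> graph dTt Tt"
      using half_ii_i[OF greenR2 _ _ MrTt addTt] II by blast
    show "graph dT T = adjoint_graph dS S \<and> graph dTt Tt = adjoint_graph dSt St"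
      using c1 c2 subT subTt clT clTt by blast
  qed
qed


end
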